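(* Let $s,t\geq0$ with $s\neq1+\delta/\gamma$ and $s+t>1+\delta/\gamma$. Then there is $c>0$ such that for all $b>0$ and $a\geq0$ $$\int_{\mathbb{R}^d}\frac{|v(\xi)|^2}{(a+\omega(\xi))^s(b+\omega(\xi))^t}\mathrm{d}\xi\leq c\,(a+1)^{-(s-1-\delta/\gamma)_+}\,b^{-\min\{s+t-1-\delta/\gamma,\,t\}}.$$
   Context: Standing assumptions: $d\in\mathbb{N}$; $v:\mathbb{R}^d\to\mathbb{R}$, $\omega,\Omega:\mathbb{R}^d\to[0,\infty)$ rotation invariant; $\alpha<d/2$, $\gamma\in\{1,2\}$, $\delta:=d-2\alpha-\gamma<\gamma$; constants $C>0,c_b>0,c_p\geq0$ with $\Omega\in C^\gamma$, $|v(k)|\leq C|k|^{-\alpha}$, $\omega(k)\geq C(c_b+k^2)^{\gamma/2}$, $\Omega(p)\geq C(c_p+p^2)^{\gamma/2}$, $|\partial^\nu\Omega(p)|\leq C(c_p+p^2)^{(\gamma-|\nu|)/2}$ for $|\nu|\in\{1,\gamma\}$. $x_+:=\max\{x,0\}$. *)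

theory Defs
  imports "HOL-Analysis.Analysis"
begin

end

theory Submission
  imports Defs
begin


lemma nn_integral_scale:
  fixes f :: "'a::euclidean_space \<Rightarrow> ennreal"
  assumes [measurable]: "f \<in> borel_measurable borel" and c: "c > 0"
  shows "(\<integral>\<^sup>+x. f x \<partial>lborel) = ennreal (c ^ DIM('a)) * (\<integral>\<^sup>+x. f (c *\<^sub>R x) \<partial>lborel)"
  using c by (subst lborel_affine[of c 0]) (simp_all add: nn_integral_density nn_integral_distr nn_integral_cmult)

lemma AE_coords_nonzero:
  "AE x in (lborel :: 'a::euclidean_space measure). \<forall>b\<in>Basis. x \<bullet> b \<noteq> 0"
proof (rule AE_finite_allI[OF finite_Basis])
  fix b :: 'a assume b: "b \<in> Basis"
  have "negligible {x::'a. b \<bullet> x = 0}" using b by (intro negligible_hyperplane) auto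
  then have "{x::'a. b \<bullet> x = 0} \<in> null_sets lebesgue" by (simp add: negligible_iff_null_sets)
  then have "AE x in lebesgue. x \<notin> {x::'a. b \<bullet> x = 0}" by (rule AE_not_in)
  then show "AE x in lborel. x \<bullet> b \<noteq> 0" by (simp add: AE_completion_iff inner_commute)
qed

lemma one_dim_near0:
  fixes \<theta> :: real assumes "0 \<le> \<theta>" "\<theta> < 1"
  shows "(\<integral>\<^sup>+x. ennreal (indicator {-1..1} x * \<bar>x\<bar> powr (-\<theta>)) \<partial>lborel) < \<infinity>"
proof -
  define g where "g = (\<lambda>x::real. indicator {0..1} x * x powr (-\<theta>))"
  have gm[measurable]: "g \<in> borel_measurable borel" unfolding g_def by measurable
  have "((\<lambda>x. x powr (-\<theta>)) has_integral (1 powr (-\<theta>+1) / (-\<theta>+1))) {0..1}"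
    using assms by (intro has_integral_powr_from_0) auto
  then have "((\<lambda>x. if x \<in> {0..1} then x powr (-\<theta>) else 0) has_integral (1 powr (-\<theta>+1) / (-\<theta>+1))) UNIV"
    by (simp only: has_integral_restrict_UNIV)
  moreover have "(\<lambda>x. if x \<in> {0..1} then x powr (-\<theta>) else 0) = g" by (auto simp: g_def indicator_def fun_eq_iff)
  ultimately have "(g has_integral (1 powr (-\<theta>+1) / (-\<theta>+1))) UNIV" by simp
  then have gi: "(\<integral>\<^sup>+x. ennreal (g x) \<partial>lborel) = ennreal (1 powr (-\<theta>+1) / (-\<theta>+1))"
    by (intro nn_integral_has_integral_lborel) (auto simp: g_def indicator_def)
  have gi2: "(\<integral>\<^sup>+x. ennreal (g (-x)) \<partial>lborel) = (\<integral>\<^sup>+x. ennreal (g x) \<partial>lborel)"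
    using nn_integral_real_affine[of "\<lambda>x. ennreal (g x)" "-1" 0] by simp
  have "(\<integral>\<^sup>+x. ennreal (indicator {-1..1} x * \<bar>x\<bar> powr (-\<theta>)) \<partial>lborel)
      \<le> (\<integral>\<^sup>+x. ennreal (g x) + ennreal (g (-x)) \<partial>lborel)"
    by (intro nn_integral_mono) (auto simp: g_def indicator_def simp flip: ennreal_plus)
  also have "\<dots> = (\<integral>\<^sup>+x. ennreal (g x) \<partial>lborel) + (\<integral>\<^sup>+x. ennreal (g (-x)) \<partial>lborel)"
    by (intro nn_integral_add) auto
  also have "\<dots> < \<infinity>" using gi gi2 by simp
  finally show ?thesis .
qed

lemma one_dim_tail:
  fixes r :: real assumes "1 < r"
  shows "(\<integral>\<^sup>+x. ennreal (max 1 \<bar>x\<bar> powr (-r)) \<partial>lborel) < \<infinity>"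
proof -
  define g where "g = (\<lambda>x::real. indicator {1..} x * x powr (-r))"
  have gm[measurable]: "g \<in> borel_measurable borel" unfolding g_def by measurable
  have "((\<lambda>x. x powr (-r)) has_integral (-(1 powr (-r+1)) / (-r+1))) {1..}"
    using assms by (intro has_integral_powr_to_inf) auto
  then have "((\<lambda>x. if x \<in> {1..} then x powr (-r) else 0) has_integral (-(1 powr (-r+1)) / (-r+1))) UNIV"
    by (simp only: has_integral_restrict_UNIV)
  moreover have "(\<lambda>x. if x \<in> {1..} then x powr (-r) else 0) = g" by (auto simp: g_def indicator_def fun_eq_iff)
  ultimately have "(g has_integral (-(1 powr (-r+1)) / (-r+1))) UNIV" by simp
  then have gi: "(\<integral>\<^sup>+x. ennreal (g x) \<partial>lborel) = ennreal (-(1 powr (-r+1)) / (-r+1))"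
    using assms by (intro nn_integral_has_integral_lborel) (auto simp: g_def indicator_def)
  have gi2: "(\<integral>\<^sup>+x. ennreal (g (-x)) \<partial>lborel) = (\<integral>\<^sup>+x. ennreal (g x) \<partial>lborel)"
    using nn_integral_real_affine[of "\<lambda>x. ennreal (g x)" "-1" 0] by simp
  have le: "max 1 \<bar>x\<bar> powr (-r) \<le> indicator {-1..1} x + g x + g (-x)" for x
  proof (cases "\<bar>x\<bar> \<le> 1")
    case True
    then have "max 1 \<bar>x\<bar> powr (-r) = 1" by simp
    then show ?thesis using True assms by (auto simp: g_def indicator_def)
  next
    case False
    then show ?thesis by (auto simp: g_def indicator_def)
  qed
  have "(\<integral>\<^sup>+x. ennreal (max 1 \<bar>x\<bar> powr (-r)) \<partial>lborel)
      \<le> (\<integral>\<^sup>+x. indicator {-1..1} x + ennreal (g x) + ennreal (g (-x)) \<partial>lborel)"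
    using le by (intro nn_integral_mono) (auto simp: g_def indicator_def simp flip: ennreal_plus)
  also have "\<dots> = (\<integral>\<^sup>+x. indicator {-1..1::real} x \<partial>lborel) + (\<integral>\<^sup>+x. ennreal (g x) \<partial>lborel) + (\<integral>\<^sup>+x. ennreal (g (-x)) \<partial>lborel)"
    by (subst nn_integral_add; (subst nn_integral_add)?) auto
  also have "\<dots> < \<infinity>" using gi gi2 by simp
  finally show ?thesis .
qed


lemma radial_finite:
  fixes \<beta> \<gamma> p :: real
  assumes b: "\<beta> < DIM('a)" and q: "\<beta> + \<gamma>*p > DIM('a)" and p: "p \<ge> 0" and g: "\<gamma> > 0"
  shows "(\<integral>\<^sup>+\<eta>. ennreal (norm \<eta> powr (-\<beta>) * (1 + norm \<eta> powr \<gamma>) powr (-p)) \<partial>(lborel::'a::euclidean_space measure)) < \<infinity>"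
proof -
  define D where "D = real DIM('a)"
  have D: "D > 0" unfolding D_def by simp
  define \<theta> where "\<theta> = max \<beta> 0 / D"
  define r where "r = (\<beta> + \<gamma>*p) / D"
  have \<theta>: "0 \<le> \<theta>" "\<theta> < 1" using b D unfolding \<theta>_def D_def by (auto simp: field_simps)
  have r: "1 < r" using q D unfolding r_def D_def by (auto simp: field_simps)
  define \<psi>1 where "\<psi>1 = (\<lambda>x::real. indicator {-1..1} x * \<bar>x\<bar> powr (-\<theta>))"
  define \<psi>2 where "\<psi>2 = (\<lambda>x::real. max 1 \<bar>x\<bar> powr (-r))"
  have m1[measurable]: "\<psi>1 \<in> borel_measurable borel" unfolding \<psi>1_def by measurable
  have m2[measurable]: "\<psi>2 \<in> borel_measurable borel" unfolding \<psi>2_def by measurable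
  have n1: "\<psi>1 x \<ge> 0" "\<psi>2 x \<ge> 0" for x unfolding \<psi>1_def \<psi>2_def by (auto simp: indicator_def)
  have cardB: "real (card (Basis::'a set)) = D" unfolding D_def by simp
  have pw: "norm \<eta> powr (-\<beta>) * (1 + norm \<eta> powr \<gamma>) powr (-p)
      \<le> (\<Prod>b\<in>Basis. \<psi>1 (\<eta> \<bullet> b)) + (\<Prod>b\<in>Basis. \<psi>2 (\<eta> \<bullet> b))"
    if nz: "\<forall>b\<in>Basis. \<eta> \<bullet> b \<noteq> 0" for \<eta> :: 'a
  proof -
    have \<eta>0: "\<eta> \<noteq> 0" using nz SOME_Basis by force
    then have npos: "norm \<eta> > 0" by simp
    have P1: "0 \<le> (\<Prod>b\<in>Basis. \<psi>1 (\<eta> \<bullet> b))" "0 \<le> (\<Prod>b\<in>Basis. \<psi>2 (\<eta> \<bullet> b))"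
      using n1 by (auto intro: prod_nonneg)
    show ?thesis
    proof (cases "norm \<eta> \<le> 1")
      case True
      have "(1 + norm \<eta> powr \<gamma>) powr (-p) \<le> 1" using p powr_mono2'[of "-p" 1 "1 + norm \<eta> powr \<gamma>"] by simp
      then have "norm \<eta> powr (-\<beta>) * (1 + norm \<eta> powr \<gamma>) powr (-p) \<le> norm \<eta> powr (-\<beta>)"
        by (intro mult_left_le) auto
      also have "\<dots> \<le> norm \<eta> powr (-(\<theta> * D))"
        using True npos D by (intro powr_mono') (auto simp: \<theta>_def)
      also have "\<dots> = (\<Prod>b\<in>(Basis::'a set). norm \<eta> powr (-\<theta>))"
        using npos by (simp add: cardB powr_realpow[symmetric] powr_powr)
      also have "\<dots> \<le> (\<Prod>b\<in>Basis. \<psi>1 (\<eta> \<bullet> b))"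
      proof (rule prod_mono)
        fix b :: 'a assume bB: "b \<in> Basis"
        have le: "\<bar>\<eta> \<bullet> b\<bar> \<le> norm \<eta>" using bB by (rule Basis_le_norm)
        have "norm \<eta> powr (-\<theta>) \<le> \<bar>\<eta> \<bullet> b\<bar> powr (-\<theta>)"
          using le nz bB \<theta> by (intro powr_mono2') auto
        moreover have "\<eta> \<bullet> b \<in> {-1..1}" using le True by auto
        ultimately show "0 \<le> norm \<eta> powr (-\<theta>) \<and> norm \<eta> powr (-\<theta>) \<le> \<psi>1 (\<eta> \<bullet> b)"
          by (simp add: \<psi>1_def)
      qed
      finally show ?thesis using P1 by linarith
    next
      case False
      have "(1 + norm \<eta> powr \<gamma>) powr (-p) \<le> (norm \<eta> powr \<gamma>) powr (-p)"
        using p npos by (intro powr_mono2') auto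
      then have "norm \<eta> powr (-\<beta>) * (1 + norm \<eta> powr \<gamma>) powr (-p) \<le> norm \<eta> powr (-\<beta>) * (norm \<eta> powr \<gamma>) powr (-p)"
        by (intro mult_left_mono) auto
      also have "\<dots> = norm \<eta> powr (-(r * D))"
        using D by (simp add: powr_powr r_def flip: powr_add)
      also have "\<dots> = (\<Prod>b\<in>(Basis::'a set). norm \<eta> powr (-r))"
        using npos by (simp add: cardB powr_realpow[symmetric] powr_powr)
      also have "\<dots> \<le> (\<Prod>b\<in>Basis. \<psi>2 (\<eta> \<bullet> b))"
      proof (rule prod_mono)
        fix b :: 'a assume bB: "b \<in> Basis"
        have le: "\<bar>\<eta> \<bullet> b\<bar> \<le> norm \<eta>" using bB by (rule Basis_le_norm)
        have "norm \<eta> powr (-r) \<le> max 1 \<bar>\<eta> \<bullet> b\<bar> powr (-r)"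
          using le False r by (intro powr_mono2') auto
        then show "0 \<le> norm \<eta> powr (-r) \<and> norm \<eta> powr (-r) \<le> \<psi>2 (\<eta> \<bullet> b)"
          by (simp add: \<psi>2_def)
      qed
      finally show ?thesis using P1 by linarith
    qed
  qed
  have "(\<integral>\<^sup>+\<eta>. ennreal (norm \<eta> powr (-\<beta>) * (1 + norm \<eta> powr \<gamma>) powr (-p)) \<partial>(lborel::'a measure))
      \<le> (\<integral>\<^sup>+\<eta>. (\<Prod>b\<in>Basis. ennreal (\<psi>1 (\<eta> \<bullet> b))) + (\<Prod>b\<in>Basis. ennreal (\<psi>2 (\<eta> \<bullet> b))) \<partial>(lborel::'a measure))"
  proof (rule nn_integral_mono_AE)
    show "AE \<eta> in (lborel::'a measure). ennreal (norm \<eta> powr (-\<beta>) * (1 + norm \<eta> powr \<gamma>) powr (-p))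
      \<le> (\<Prod>b\<in>Basis. ennreal (\<psi>1 (\<eta> \<bullet> b))) + (\<Prod>b\<in>Basis. ennreal (\<psi>2 (\<eta> \<bullet> b)))"
      using AE_coords_nonzero
    proof eventually_elim
      case (elim \<eta>)
      have "0 \<le> (\<Prod>b\<in>Basis. \<psi>1 (\<eta> \<bullet> b))" "0 \<le> (\<Prod>b\<in>Basis. \<psi>2 (\<eta> \<bullet> b))"
        using n1 by (auto intro: prod_nonneg)
      then show ?case using pw[OF elim] n1
        by (simp add: prod_ennreal ennreal_plus[symmetric] ennreal_leI del: ennreal_plus)
    qed
  qed
  also have "\<dots> = (\<integral>\<^sup>+\<eta>. (\<Prod>b\<in>Basis. ennreal (\<psi>1 (\<eta> \<bullet> b))) \<partial>(lborel::'a measure)) + (\<integral>\<^sup>+\<eta>. (\<Prod>b\<in>Basis. ennreal (\<psi>2 (\<eta> \<bullet> b))) \<partial>(lborel::'a measure))"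
    by (intro nn_integral_add) auto
  also have "\<dots> = (\<Prod>b\<in>(Basis::'a set). (\<integral>\<^sup>+x. ennreal (\<psi>1 x) \<partial>lborel)) + (\<Prod>b\<in>(Basis::'a set). (\<integral>\<^sup>+x. ennreal (\<psi>2 x) \<partial>lborel))"
    by (subst nn_integral_lborel_prod; simp)+
  also have "\<dots> < \<infinity>"
    using one_dim_near0[OF \<theta>] one_dim_tail[OF r]
    by (simp add: \<psi>1_def \<psi>2_def less_top[symmetric] ennreal_prod_eq_top power_eq_top_ennreal)
  finally show ?thesis .
qed


lemma radial_scale:
  fixes L \<beta> \<gamma> p :: real assumes L: "L > 0" and g: "\<gamma> > 0"
  shows "(\<integral>\<^sup>+\<xi>. ennreal (norm \<xi> powr (-\<beta>) * (L + norm \<xi> powr \<gamma>) powr (-p)) \<partial>(lborel::'a::euclidean_space measure))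
       = ennreal (L powr ((DIM('a) - \<beta>)/\<gamma> - p)) *
         (\<integral>\<^sup>+\<eta>. ennreal (norm \<eta> powr (-\<beta>) * (1 + norm \<eta> powr \<gamma>) powr (-p)) \<partial>(lborel::'a measure))"
proof -
  define lam where "lam = L powr (1/\<gamma>)"
  have lp: "lam > 0" using L by (simp add: lam_def)
  have lg: "lam powr \<gamma> = L" using L g by (simp add: lam_def powr_powr)
  have eq: "ennreal (norm (lam *\<^sub>R \<eta>) powr (-\<beta>) * (L + norm (lam *\<^sub>R \<eta>) powr \<gamma>) powr (-p))
      = ennreal (lam powr (-\<beta>) * L powr (-p)) * ennreal (norm \<eta> powr (-\<beta>) * (1 + norm \<eta> powr \<gamma>) powr (-p))"
    for \<eta> :: 'a
  proof -
    have "norm (lam *\<^sub>R \<eta>) = lam * norm \<eta>" using lp by simp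
    then have "norm (lam *\<^sub>R \<eta>) powr (-\<beta>) * (L + norm (lam *\<^sub>R \<eta>) powr \<gamma>) powr (-p)
        = lam powr (-\<beta>) * norm \<eta> powr (-\<beta>) * (L * (1 + norm \<eta> powr \<gamma>)) powr (-p)"
      using lp lg by (simp add: powr_mult distrib_left)
    also have "\<dots> = (lam powr (-\<beta>) * L powr (-p)) * (norm \<eta> powr (-\<beta>) * (1 + norm \<eta> powr \<gamma>) powr (-p))"
      using L by (simp add: powr_mult)
    finally show ?thesis by (simp add: ennreal_mult)
  qed
  have "(\<integral>\<^sup>+\<xi>. ennreal (norm \<xi> powr (-\<beta>) * (L + norm \<xi> powr \<gamma>) powr (-p)) \<partial>(lborel::'a measure))
     = ennreal (lam ^ DIM('a)) * (\<integral>\<^sup>+\<eta>. ennreal (norm (lam *\<^sub>R \<eta>) powr (-\<beta>) * (L + norm (lam *\<^sub>R \<eta>) powr \<gamma>) powr (-p)) \<partial>(lborel::'a measure))"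
    by (rule nn_integral_scale[OF _ lp]) measurable
  also have "\<dots> = ennreal (lam ^ DIM('a)) * (ennreal (lam powr (-\<beta>) * L powr (-p)) *
         (\<integral>\<^sup>+\<eta>. ennreal (norm \<eta> powr (-\<beta>) * (1 + norm \<eta> powr \<gamma>) powr (-p)) \<partial>(lborel::'a measure)))"
    by (simp only: eq, subst nn_integral_cmult) auto
  also have "ennreal (lam ^ DIM('a)) * ennreal (lam powr (-\<beta>) * L powr (-p)) = ennreal (L powr ((DIM('a) - \<beta>)/\<gamma> - p))"
  proof -
    have a1: "lam ^ DIM('a) = L powr (DIM('a) / \<gamma>)"
      using lp L by (simp add: powr_realpow[symmetric] lam_def powr_powr)
    have a2: "lam powr (-\<beta>) = L powr (-\<beta> / \<gamma>)"
      using L by (simp add: lam_def powr_powr)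
    have a3: "(DIM('a) - \<beta>)/\<gamma> - p = DIM('a) / \<gamma> + (-\<beta> / \<gamma>) + (-p)"
      by (simp add: diff_divide_distrib)
    have "lam ^ DIM('a) * (lam powr (-\<beta>) * L powr (-p)) = L powr ((DIM('a) - \<beta>)/\<gamma> - p)"
      unfolding a1 a2 a3 by (simp only: powr_add mult.assoc)
    then show ?thesis using lp L by (simp add: ennreal_mult[symmetric])
  qed
  ultimately show ?thesis by (simp add: mult.assoc[symmetric])
qed



lemma div_powr_eq:
  fixes x P Q s t :: real assumes "P > 0" "Q > 0"
  shows "x / (P powr s * Q powr t) = x * P powr (-s) * Q powr (-t)"
  using assms by (simp add: powr_minus field_simps)

lemma pointA:
  fixes r w K a b s t vv C \<alpha> \<gamma> :: real
  assumes r: "r > 0" and w: "w \<ge> K * (1 + r powr \<gamma>)" and K: "K > 0" and a: "a \<ge> 0" and b: "b > 0"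
    and s: "s \<ge> 0" and t: "t \<ge> 0" and vv: "0 \<le> vv" "vv \<le> C\<^sup>2 * r powr (-(2*\<alpha>))"
  shows "vv / ((a+w) powr s * (b+w) powr t)
     \<le> C\<^sup>2 * min 1 K powr (-s) * b powr (-t) * (r powr (-(2*\<alpha>)) * ((a+1) + r powr \<gamma>) powr (-s))"
proof -
  define K' where "K' = min 1 K"
  have K': "K' > 0" "K' \<le> 1" "K' \<le> K" using K by (auto simp: K'_def)
  have rg: "r powr \<gamma> > 0" using r by simp
  have wpos: "w > 0"
  proof -
    have "1 + r powr \<gamma> > 0" using rg by linarith
    then have "K * (1 + r powr \<gamma>) > 0" using K by (intro mult_pos_pos) auto
    then show ?thesis using w by linarith
  qed
  have lb: "K' * ((a+1) + r powr \<gamma>) \<le> a + w"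
  proof -
    have "K' * a \<le> a" using K' a by (simp add: mult_left_le_one_le)
    moreover have "K' * (1 + r powr \<gamma>) \<le> K * (1 + r powr \<gamma>)" using K' rg by (intro mult_right_mono) auto
    ultimately show ?thesis using w by (simp add: algebra_simps)
  qed
  have lbpos: "K' * ((a+1) + r powr \<gamma>) > 0" proof -
    have "(a+1) + r powr \<gamma> > 0" using a rg by linarith
    then show ?thesis using K' by (intro mult_pos_pos) auto
  qed
  have f1: "(a+w) powr (-s) \<le> K' powr (-s) * ((a+1) + r powr \<gamma>) powr (-s)"
    using powr_mono2'[of "-s", OF _ lbpos lb] s a rg K' by (simp add: powr_mult)
  have f2: "(b+w) powr (-t) \<le> b powr (-t)"
    using powr_mono2'[of "-t" b "b+w"] t b wpos by simp
  have "vv / ((a+w) powr s * (b+w) powr t) = vv * (a+w) powr (-s) * (b+w) powr (-t)"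
    using a wpos b by (intro div_powr_eq) auto
  also have "\<dots> \<le> (C\<^sup>2 * r powr (-(2*\<alpha>))) * (K' powr (-s) * ((a+1) + r powr \<gamma>) powr (-s)) * b powr (-t)"
    using vv f1 f2 by (intro mult_mono) auto
  also have "\<dots> = C\<^sup>2 * K' powr (-s) * b powr (-t) * (r powr (-(2*\<alpha>)) * ((a+1) + r powr \<gamma>) powr (-s))"
    by (simp only: mult_ac)
  finally show ?thesis unfolding K'_def .
qed

lemma pointB:
  fixes r w K a b s t vv C \<alpha> \<gamma> :: real
  assumes r: "r > 0" and w: "w \<ge> K * (1 + r powr \<gamma>)" and K: "K > 0" and a: "a \<ge> 0" and b: "b > 0"
    and s: "s \<ge> 0" and t: "t \<ge> 0" and vv: "0 \<le> vv" "vv \<le> C\<^sup>2 * r powr (-(2*\<alpha>))"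
  shows "vv / ((a+w) powr s * (b+w) powr t)
     \<le> C\<^sup>2 * K powr (-s) * min 1 K powr (-t) * (r powr (-(2*\<alpha> + \<gamma> * s)) * ((b+1) + r powr \<gamma>) powr (-t))"
proof -
  define K' where "K' = min 1 K"
  have K': "K' > 0" "K' \<le> 1" "K' \<le> K" using K by (auto simp: K'_def)
  have rg: "r powr \<gamma> > 0" using r by simp
  have wpos: "w > 0"
  proof -
    have "1 + r powr \<gamma> > 0" using rg by linarith
    then have "K * (1 + r powr \<gamma>) > 0" using K by (intro mult_pos_pos) auto
    then show ?thesis using w by linarith
  qed
  have lb: "K' * ((b+1) + r powr \<gamma>) \<le> b + w"
  proof -
    have "K' * b \<le> b" using K' b by (simp add: mult_left_le_one_le)
    moreover have "K' * (1 + r powr \<gamma>) \<le> K * (1 + r powr \<gamma>)" using K' rg by (intro mult_right_mono) auto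
    ultimately show ?thesis using w by (simp add: algebra_simps)
  qed
  have lbpos: "K' * ((b+1) + r powr \<gamma>) > 0" proof -
    have "(b+1) + r powr \<gamma> > 0" using b rg by linarith
    then show ?thesis using K' by (intro mult_pos_pos) auto
  qed
  have f2: "(b+w) powr (-t) \<le> K' powr (-t) * ((b+1) + r powr \<gamma>) powr (-t)"
    using powr_mono2'[of "-t", OF _ lbpos lb] t b rg K' by (simp add: powr_mult)
  have lb1: "K * r powr \<gamma> \<le> a + w" using w K a by (simp add: algebra_simps)
  have lb1pos: "K * r powr \<gamma> > 0" using K rg by simp
  have f1: "(a+w) powr (-s) \<le> K powr (-s) * r powr (-(\<gamma> * s))"
    using powr_mono2'[of "-s", OF _ lb1pos lb1] s K r by (simp add: powr_mult powr_powr)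
  have "vv / ((a+w) powr s * (b+w) powr t) = vv * (a+w) powr (-s) * (b+w) powr (-t)"
    using a wpos b by (intro div_powr_eq) auto
  also have "\<dots> \<le> (C\<^sup>2 * r powr (-(2*\<alpha>))) * (K powr (-s) * r powr (-(\<gamma> * s))) * (K' powr (-t) * ((b+1) + r powr \<gamma>) powr (-t))"
    using vv f1 f2 by (intro mult_mono) auto
  also have "\<dots> = C\<^sup>2 * K powr (-s) * K' powr (-t) * ((r powr (-(2*\<alpha>)) * r powr (-(\<gamma> * s))) * ((b+1) + r powr \<gamma>) powr (-t))"
    by (simp only: mult_ac)
  also have "r powr (-(2*\<alpha>)) * r powr (-(\<gamma> * s)) = r powr (-(2*\<alpha> + \<gamma> * s))"
    by (simp add: powr_add[symmetric])
  finally show ?thesis unfolding K'_def .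
qed

lemma omega_lower:
  fixes C cb \<gamma> :: real and \<omega> :: "'a::real_normed_vector \<Rightarrow> real"
  assumes C: "C > 0" and cb: "cb > 0" and g: "\<gamma> = 1 \<or> \<gamma> = 2"
    and wb: "\<And>k. \<omega> k \<ge> C * (cb + (norm k)\<^sup>2) powr (\<gamma> / 2)"
  shows "\<exists>K>0. \<forall>k. \<omega> k \<ge> K * (1 + norm k powr \<gamma>)"
proof -
  define m where "m = min cb 1"
  have m: "m > 0" "m \<le> cb" "m \<le> 1" using cb by (auto simp: m_def)
  have base: "cb + (norm k)\<^sup>2 \<ge> m * (1 + (norm k)\<^sup>2)" for k :: 'a
  proof -
    have "m * (norm k)\<^sup>2 \<le> (norm k)\<^sup>2" using m by (intro mult_left_le_one_le) auto
    then show ?thesis using m by (simp add: distrib_left)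
  qed
  show ?thesis
  proof (cases "\<gamma> = 2")
    case True
    show ?thesis
    proof (intro exI[of _ "C*m"] conjI allI)
      show "C*m > 0" using C m by simp
      fix k :: 'a
      have "C * m * (1 + norm k powr \<gamma>) = C * (m * (1 + (norm k)\<^sup>2))"
        using True by (simp add: powr_numeral)
      also have "\<dots> \<le> C * (cb + (norm k)\<^sup>2)" using base C by simp
      also have "\<dots> \<le> \<omega> k" using wb[of k] True cb by (simp add: abs_of_nonneg)
      finally show "C * m * (1 + norm k powr \<gamma>) \<le> \<omega> k" .
    qed
  next
    case False
    then have g1: "\<gamma> = 1" using g by simp
    show ?thesis
    proof (intro exI[of _ "C * sqrt m / 2"] conjI allI)
      show "C * sqrt m / 2 > 0" using C m by simp
      fix k :: 'a
      have sq: "0 \<le> (norm k - 1)\<^sup>2" by simp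
      have e1: "(1 + norm k)\<^sup>2 = 1 + (norm k)\<^sup>2 + 2 * norm k" by (simp add: power2_sum)
      have e2: "(norm k - 1)\<^sup>2 = (norm k)\<^sup>2 + 1 - 2 * norm k" by (simp add: power2_diff)
      have e3: "(2 * sqrt (1 + (norm k)\<^sup>2))\<^sup>2 = 4 * (1 + (norm k)\<^sup>2)" by (simp add: power_mult_distrib)
      have "(1 + norm k)\<^sup>2 \<le> (2 * sqrt (1 + (norm k)\<^sup>2))\<^sup>2"
        unfolding e1 e3
      proof -
        have lin: "1 + y + 2 * n \<le> 4 * (1 + y)" if "0 \<le> y + 1 - 2 * n" "0 \<le> y" for y n :: real
          using that by (simp add: ring_distribs)
        show "1 + (norm k)\<^sup>2 + 2 * norm k \<le> 4 * (1 + (norm k)\<^sup>2)"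
          by (rule lin) (use sq e2 in auto)
      qed
      then have "1 + norm k \<le> 2 * sqrt (1 + (norm k)\<^sup>2)"
        by (rule power2_le_imp_le) simp
      then have "(1 + norm k) / 2 \<le> sqrt (1 + (norm k)\<^sup>2)" by simp
      then have "sqrt m * ((1 + norm k) / 2) \<le> sqrt m * sqrt (1 + (norm k)\<^sup>2)"
        by (rule mult_left_mono) (use m in simp)
      also have "\<dots> = sqrt (m * (1 + (norm k)\<^sup>2))" by (simp add: real_sqrt_mult)
      also have "\<dots> \<le> sqrt (cb + (norm k)\<^sup>2)" using base by simp
      finally have "C * (sqrt m * ((1 + norm k) / 2)) \<le> C * sqrt (cb + (norm k)\<^sup>2)"
        using C by (intro mult_left_mono) auto
      then have "C * sqrt m / 2 * (1 + norm k) \<le> C * sqrt (cb + (norm k)\<^sup>2)"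
        by (simp add: algebra_simps)
      also have "\<dots> \<le> \<omega> k" using wb[of k] g1 cb by (simp add: powr_half_sqrt add_pos_nonneg)
      finally show "C * sqrt m / 2 * (1 + norm k powr \<gamma>) \<le> \<omega> k" using g1 by simp
    qed
  qed
qed


theorem lemmaA1:
  fixes v :: "real ^ 'n \<Rightarrow> real" and \<omega> :: "real ^ 'n \<Rightarrow> real"
    and \<alpha> \<gamma> C c\<^sub>b s t :: real
  defines "\<delta> \<equiv> real CARD('n) - 2 * \<alpha> - \<gamma>"
  assumes v_rot: "\<And>f k. orthogonal_transformation f \<Longrightarrow> v (f k) = v k"
    and \<omega>_rot: "\<And>f k. orthogonal_transformation f \<Longrightarrow> \<omega> (f k) = \<omega> k"
    and \<omega>_nonneg: "\<And>k. \<omega> k \<ge> 0"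
    and \<alpha>_lt: "\<alpha> < real CARD('n) / 2"
    and \<gamma>_cases: "\<gamma> = 1 \<or> \<gamma> = 2"
    and \<delta>_lt: "\<delta> < \<gamma>"
    and C_pos: "C > 0" and cb_pos: "c\<^sub>b > 0"
    and v_bound: "\<And>k. k \<noteq> 0 \<Longrightarrow> \<bar>v k\<bar> \<le> C * norm k powr (- \<alpha>)"
    and \<omega>_bound: "\<And>k. \<omega> k \<ge> C * (c\<^sub>b + (norm k)\<^sup>2) powr (\<gamma> / 2)"
    and s_nonneg: "s \<ge> 0" and t_nonneg: "t \<ge> 0"
    and s_ne: "s \<noteq> 1 + \<delta> / \<gamma>"
    and st_gt: "s + t > 1 + \<delta> / \<gamma>"
  shows "\<exists>c>0. \<forall>b>0. \<forall>a\<ge>0.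
    (\<integral>\<^sup>+ \<xi>. ennreal ((v \<xi>)\<^sup>2 / ((a + \<omega> \<xi>) powr s * (b + \<omega> \<xi>) powr t)) \<partial>lborel)
      \<le> ennreal (c * (a + 1) powr (- max (s - 1 - \<delta> / \<gamma>) 0)
                   * b powr (- min (s + t - 1 - \<delta> / \<gamma>) t))"
proof -
  have gpos: "\<gamma> > 0" using \<gamma>_cases by auto
  obtain K where K: "K > 0" and wK: "\<And>k. \<omega> k \<ge> K * (1 + norm k powr \<gamma>)"
    using omega_lower[OF C_pos cb_pos \<gamma>_cases \<omega>_bound] by blast
  define K' where "K' = min 1 K"
  have K'pos: "K' > 0" using K by (simp add: K'_def)
  have vb: "(v k)\<^sup>2 \<le> C\<^sup>2 * norm k powr (-(2*\<alpha>))" if "k \<noteq> 0" for k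
  proof -
    have "\<bar>v k\<bar>\<^sup>2 \<le> (C * norm k powr (-\<alpha>))\<^sup>2"
      using v_bound[OF that] by (intro power_mono) auto
    also have "\<dots> = C\<^sup>2 * (norm k powr (-\<alpha>) * norm k powr (-\<alpha>))"
      by (simp add: power2_eq_square algebra_simps)
    also have "norm k powr (-\<alpha>) * norm k powr (-\<alpha>) = norm k powr (-(2*\<alpha>))"
      by (simp add: powr_add[symmetric])
    finally show ?thesis by simp
  qed
  have \<kappa>: "1 + \<delta>/\<gamma> = (real CARD('n) - 2*\<alpha>)/\<gamma>"
    using gpos by (simp add: \<delta>_def field_simps)
  have dimeq: "real DIM(real^'n) = real CARD('n)" by simp
  consider "s > 1 + \<delta>/\<gamma>" | "s < 1 + \<delta>/\<gamma>" using s_ne by linarith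
  then show ?thesis
  proof cases
    case 1
    define G where "G = (\<integral>\<^sup>+\<eta>. ennreal (norm \<eta> powr (-(2*\<alpha>)) * (1 + norm \<eta> powr \<gamma>) powr (-s)) \<partial>(lborel::(real^'n) measure))"
    have c1: "2*\<alpha> + \<gamma> * s > real DIM(real^'n)"
      using 1 gpos unfolding \<kappa> dimeq by (simp add: divide_less_eq algebra_simps)
    have Gfin: "G < \<infinity>" unfolding G_def
      by (rule radial_finite) (use \<alpha>_lt c1 s_nonneg gpos in auto)
    define g where "g = enn2real G"
    have Gg: "G = ennreal g" "g \<ge> 0" using Gfin by (auto simp: g_def less_top)
    define c where "c = C\<^sup>2 * K' powr (-s) * g + 1"
    have cpos: "c > 0"
    proof -
      have "0 \<le> C\<^sup>2 * K' powr (-s) * g" using Gg by (intro mult_nonneg_nonneg) auto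
      then show ?thesis by (simp add: c_def)
    qed
    show ?thesis
    proof (intro exI[of _ c] conjI allI impI cpos)
      fix b a :: real assume b: "b > 0" and a: "a \<ge> 0"
      define X where "X = C\<^sup>2 * K' powr (-s) * b powr (-t)"
      have X: "X \<ge> 0" by (simp add: X_def)
      have "(\<integral>\<^sup>+ \<xi>. ennreal ((v \<xi>)\<^sup>2 / ((a + \<omega> \<xi>) powr s * (b + \<omega> \<xi>) powr t)) \<partial>(lborel::(real^'n) measure))
         \<le> (\<integral>\<^sup>+ \<xi>. ennreal X * ennreal (norm \<xi> powr (-(2*\<alpha>)) * ((a+1) + norm \<xi> powr \<gamma>) powr (-s)) \<partial>(lborel::(real^'n) measure))"
      proof (rule nn_integral_mono_AE)
        show "AE \<xi> in (lborel::(real^'n) measure). ennreal ((v \<xi>)\<^sup>2 / ((a + \<omega> \<xi>) powr s * (b + \<omega> \<xi>) powr t))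
           \<le> ennreal X * ennreal (norm \<xi> powr (-(2*\<alpha>)) * ((a+1) + norm \<xi> powr \<gamma>) powr (-s))"
          using AE_lborel_singleton[of 0]
        proof eventually_elim
          case (elim \<xi>)
          have "(v \<xi>)\<^sup>2 / ((a + \<omega> \<xi>) powr s * (b + \<omega> \<xi>) powr t)
              \<le> X * (norm \<xi> powr (-(2*\<alpha>)) * ((a+1) + norm \<xi> powr \<gamma>) powr (-s))"
            unfolding X_def K'_def
            by (rule pointA[OF _ wK K a b s_nonneg t_nonneg _ vb]) (use elim in auto)
          then show ?case using X by (simp add: ennreal_mult[symmetric] ennreal_leI del: ennreal_mult)
        qed
      qed
      also have "\<dots> = ennreal X * (\<integral>\<^sup>+ \<xi>. ennreal (norm \<xi> powr (-(2*\<alpha>)) * ((a+1) + norm \<xi> powr \<gamma>) powr (-s)) \<partial>(lborel::(real^'n) measure))"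
        by (rule nn_integral_cmult) measurable
      also have "\<dots> = ennreal X * (ennreal ((a+1) powr ((DIM(real^'n) - 2*\<alpha>)/\<gamma> - s)) * G)"
        unfolding G_def by (subst radial_scale) (use a gpos in auto)
      also have "\<dots>
          = ennreal (X * (a+1) powr ((DIM(real^'n) - 2*\<alpha>)/\<gamma> - s) * g)"
        using X Gg by (simp add: ennreal_mult mult.assoc)
      also have "\<dots> \<le> ennreal (c * (a + 1) powr (- max (s - 1 - \<delta> / \<gamma>) 0)
                   * b powr (- min (s + t - 1 - \<delta> / \<gamma>) t))"
      proof (rule ennreal_leI)
        have mx: "max (s - 1 - \<delta> / \<gamma>) 0 = s - 1 - \<delta>/\<gamma>" "min (s + t - 1 - \<delta> / \<gamma>) t = t"
          using 1 by auto
        have e: "(DIM(real^'n) - 2*\<alpha>)/\<gamma> - s = - (s - 1 - \<delta>/\<gamma>)" using \<kappa> by simp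
        define P where "P = (a+1) powr (- (s - 1 - \<delta>/\<gamma>)) * b powr (-t)"
        have P: "P \<ge> 0" by (simp add: P_def)
        have "X * (a+1) powr ((DIM(real^'n) - 2*\<alpha>)/\<gamma> - s) * g = (C\<^sup>2 * K' powr (-s) * g) * P"
          unfolding e X_def P_def by (simp only: mult_ac)
        also have "\<dots> \<le> c * P" unfolding c_def using P by (simp add: distrib_right)
        also have "\<dots> = c * (a + 1) powr (- max (s - 1 - \<delta> / \<gamma>) 0) * b powr (- min (s + t - 1 - \<delta> / \<gamma>) t)"
          unfolding mx P_def by (simp only: mult_ac)
        finally show "X * (a+1) powr ((DIM(real^'n) - 2*\<alpha>)/\<gamma> - s) * g \<le> \<dots>" .
      qed
      finally show "(\<integral>\<^sup>+ \<xi>. ennreal ((v \<xi>)\<^sup>2 / ((a + \<omega> \<xi>) powr s * (b + \<omega> \<xi>) powr t)) \<partial>(lborel::(real^'n) measure))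
      \<le> ennreal (c * (a + 1) powr (- max (s - 1 - \<delta> / \<gamma>) 0)
                   * b powr (- min (s + t - 1 - \<delta> / \<gamma>) t))"
        .
    qed
  next
    case 2
    define \<beta> where "\<beta> = 2*\<alpha> + \<gamma> * s"
    define G where "G = (\<integral>\<^sup>+\<eta>. ennreal (norm \<eta> powr (-\<beta>) * (1 + norm \<eta> powr \<gamma>) powr (-t)) \<partial>(lborel::(real^'n) measure))"
    have c1: "\<beta> < real DIM(real^'n)"
      using 2 gpos unfolding \<kappa> dimeq \<beta>_def by (simp add: less_divide_eq algebra_simps)
    have c2: "\<beta> + \<gamma> * t > real DIM(real^'n)"
      using st_gt gpos unfolding \<kappa> dimeq \<beta>_def by (simp add: divide_less_eq algebra_simps)
    have Gfin: "G < \<infinity>" unfolding G_def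
      by (rule radial_finite) (use c1 c2 t_nonneg gpos in auto)
    define g where "g = enn2real G"
    have Gg: "G = ennreal g" "g \<ge> 0" using Gfin by (auto simp: g_def less_top)
    define c where "c = C\<^sup>2 * K powr (-s) * K' powr (-t) * g + 1"
    have cpos: "c > 0"
    proof -
      have "0 \<le> C\<^sup>2 * K powr (-s) * K' powr (-t) * g" using Gg by (intro mult_nonneg_nonneg) auto
      then show ?thesis by (simp add: c_def)
    qed
    show ?thesis
    proof (intro exI[of _ c] conjI allI impI cpos)
      fix b a :: real assume b: "b > 0" and a: "a \<ge> 0"
      define X where "X = C\<^sup>2 * K powr (-s) * K' powr (-t)"
      have X: "X \<ge> 0" by (simp add: X_def)
      have "(\<integral>\<^sup>+ \<xi>. ennreal ((v \<xi>)\<^sup>2 / ((a + \<omega> \<xi>) powr s * (b + \<omega> \<xi>) powr t)) \<partial>(lborel::(real^'n) measure))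
         \<le> (\<integral>\<^sup>+ \<xi>. ennreal X * ennreal (norm \<xi> powr (-\<beta>) * ((b+1) + norm \<xi> powr \<gamma>) powr (-t)) \<partial>(lborel::(real^'n) measure))"
      proof (rule nn_integral_mono_AE)
        show "AE \<xi> in (lborel::(real^'n) measure). ennreal ((v \<xi>)\<^sup>2 / ((a + \<omega> \<xi>) powr s * (b + \<omega> \<xi>) powr t))
           \<le> ennreal X * ennreal (norm \<xi> powr (-\<beta>) * ((b+1) + norm \<xi> powr \<gamma>) powr (-t))"
          using AE_lborel_singleton[of 0]
        proof eventually_elim
          case (elim \<xi>)
          have "(v \<xi>)\<^sup>2 / ((a + \<omega> \<xi>) powr s * (b + \<omega> \<xi>) powr t)
              \<le> X * (norm \<xi> powr (-\<beta>) * ((b+1) + norm \<xi> powr \<gamma>) powr (-t))"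
            unfolding X_def K'_def \<beta>_def
            by (rule pointB[OF _ wK K a b s_nonneg t_nonneg _ vb]) (use elim in auto)
          then show ?case using X by (simp add: ennreal_mult[symmetric] ennreal_leI del: ennreal_mult)
        qed
      qed
      also have "\<dots> = ennreal X * (\<integral>\<^sup>+ \<xi>. ennreal (norm \<xi> powr (-\<beta>) * ((b+1) + norm \<xi> powr \<gamma>) powr (-t)) \<partial>(lborel::(real^'n) measure))"
        by (rule nn_integral_cmult) measurable
      also have "\<dots> = ennreal X * (ennreal ((b+1) powr ((DIM(real^'n) - \<beta>)/\<gamma> - t)) * G)"
        unfolding G_def by (subst radial_scale) (use b gpos in auto)
      also have "\<dots>
          = ennreal (X * (b+1) powr ((DIM(real^'n) - \<beta>)/\<gamma> - t) * g)"
        using X Gg by (simp add: ennreal_mult mult.assoc)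
      also have "\<dots> \<le> ennreal (c * (a + 1) powr (- max (s - 1 - \<delta> / \<gamma>) 0)
                   * b powr (- min (s + t - 1 - \<delta> / \<gamma>) t))"
      proof (rule ennreal_leI)
        have mx: "max (s - 1 - \<delta> / \<gamma>) 0 = 0" "min (s + t - 1 - \<delta> / \<gamma>) t = s + t - 1 - \<delta> / \<gamma>"
          using 2 by auto
        have a1: "(a + 1) powr (- 0) = 1" using a by simp
        have e: "(DIM(real^'n) - \<beta>)/\<gamma> - t = - (s + t - 1 - \<delta>/\<gamma>)"
        proof -
          have e0: "(real CARD('n) - (2*\<alpha> + \<gamma> * s))/\<gamma> = (real CARD('n) - 2*\<alpha>)/\<gamma> - s"
            using gpos by (simp add: field_simps)
          show ?thesis unfolding \<beta>_def dimeq using e0 \<kappa> by linarith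
        qed
        have m: "s + t - 1 - \<delta>/\<gamma> > 0" using st_gt by simp
        have Bb: "(b+1) powr (- (s + t - 1 - \<delta>/\<gamma>)) \<le> b powr (- (s + t - 1 - \<delta>/\<gamma>))"
          using powr_mono2'[of "- (s + t - 1 - \<delta>/\<gamma>)" b "b+1"] m b by simp
        have "X * (b+1) powr ((DIM(real^'n) - \<beta>)/\<gamma> - t) * g = (X * g) * (b+1) powr (- (s + t - 1 - \<delta>/\<gamma>))"
          unfolding e by (simp only: mult_ac)
        also have "\<dots> \<le> (X * g) * b powr (- (s + t - 1 - \<delta>/\<gamma>))"
          using Bb X Gg by (intro mult_left_mono) auto
        also have "\<dots> \<le> c * b powr (- (s + t - 1 - \<delta>/\<gamma>))"
          unfolding c_def X_def by (intro mult_right_mono) auto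
        also have "\<dots> = c * (a + 1) powr (- max (s - 1 - \<delta> / \<gamma>) 0) * b powr (- min (s + t - 1 - \<delta> / \<gamma>) t)"
          unfolding mx a1 by simp
        finally show "X * (b+1) powr ((DIM(real^'n) - \<beta>)/\<gamma> - t) * g \<le> \<dots>" .
      qed
      finally show "(\<integral>\<^sup>+ \<xi>. ennreal ((v \<xi>)\<^sup>2 / ((a + \<omega> \<xi>) powr s * (b + \<omega> \<xi>) powr t)) \<partial>(lborel::(real^'n) measure))
      \<le> ennreal (c * (a + 1) powr (- max (s - 1 - \<delta> / \<gamma>) 0)
                   * b powr (- min (s + t - 1 - \<delta> / \<gamma>) t))"
        .
    qed
  qed
qed

end
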